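(* Let $n\ge1$, $\alpha,t,p\in(0,\infty)$, $r\in(1,\infty)$ and $q\in[1,\infty)$. For a measurable function $f$ on $\mathbb{R}^n$ the following are equivalent: (1) $f\in(\dot{K}E_{q,r}^{\alpha,p})_t(\mathbb{R}^n)$; (2) $f$ can be represented as $f(x)=\sum_{k\in\mathbb{Z}}\lambda_k b_k(x)$, where $(\lambda_k)_{k\in\mathbb{Z}}$ are scalars with $\sum_{k\in\mathbb{Z}}|\lambda_k|^p<\infty$ and each $b_k$ is a dyadic central $(\alpha,q,r)$-block with support contained in $B_k$.
   Context: For $x\in\mathbb{R}^n$ and $s>0$, $B(x,s)$ is the Euclidean ball of centre $x$ and radius $s$, $|E|$ is Lebesgue measure and $\mathbf{1}_E$ the indicator of $E$. For $t\in(0,\infty)$, $r\in(1,\infty)$, $q\in[1,\infty]$, the slice space $(E_r^q)_t(\mathbb{R}^n)$ is the set of measurable $f$ on $\mathbb{R}^n$ with $\|f\|_{(E_r^q)_t(\mathbb{R}^n)}:=\Big\| x\mapsto\Big(\frac{1}{|B(x,t)|}\int_{B(x,t)}|f(y)|^r\,dy\Big)^{1/r}\Big\|_{L^q(\mathbb{R}^n)}<\infty$. For $k\in\mathbb{Z}$ let $B_k=\{x:|x|\le 2^k\}$ and $S_k=B_k\setminus B_{k-1}$. For $\alpha\in\mathbb{R}$, $p\in(0,\infty)$, the homogeneous Herz-slice space $(\dot{K}E_{q,r}^{\alpha,p})_t(\mathbb{R}^n)$ is the set of measurable $f$ with $\|f\|_{(\dot{K}E_{q,r}^{\alpha,p})_t}:=\Big(\sum_{k\in\mathbb{Z}}2^{k\alpha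 p}\|f\mathbf{1}_{S_k}\|_{(E_r^q)_t(\mathbb{R}^n)}^p\Big)^{1/p}<\infty$. A function $a$ on $\mathbb{R}^n$ is a central $(\alpha,q,r)$-block if $\operatorname{supp}(a)\subset B(0,R)$ for some $R>0$ and $\|a\|_{(E_r^q)_t(\mathbb{R}^n)}\le CR^{-\alpha}$, where $C>0$ is a fixed constant (the same for all blocks considered); it is a dyadic central $(\alpha,q,r)$-block if moreover $R=2^k$ for some $k\in\mathbb{Z}$. *)

theory Defs
  imports "HOL-Analysis.Analysis"
begin

text \<open>Real power on extended nonnegative reals (for positive exponents):
  infinity stays infinity, finite values use the real powr.\<close>
definition ennpowr :: "ennreal \<Rightarrow> real \<Rightarrow> ennreal" where
  "ennpowr x a = (if x = \<infinity> then \<infinity> else ennreal (enn2real x powr a))"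

definition loc_avg :: "real \<Rightarrow> real \<Rightarrow> ('a::euclidean_space \<Rightarrow> real) \<Rightarrow> 'a \<Rightarrow> ennreal" where
  "loc_avg t r f x =
     ennpowr (ennreal (1 / measure lebesgue (ball x t)) *
              (\<integral>\<^sup>+ y. ennreal (indicator (ball x t) y * \<bar>f y\<bar> powr r) \<partial>lebesgue)) (1 / r)"

definition slice_norm :: "real \<Rightarrow> real \<Rightarrow> real \<Rightarrow> ('a::euclidean_space \<Rightarrow> real) \<Rightarrow> ennreal" where
  "slice_norm t r q f =
     ennpowr (\<integral>\<^sup>+ x. ennpowr (loc_avg t r f x) q \<partial>lebesgue) (1 / q)"

definition Bk :: "int \<Rightarrow> 'a::euclidean_space set" where
  "Bk k = {x. norm x \<le> 2 powr (real_of_int k)}"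

definition Sk :: "int \<Rightarrow> 'a::euclidean_space set" where
  "Sk k = Bk k - Bk (k - 1)"

definition herz_slice_normp ::
  "real \<Rightarrow> real \<Rightarrow> real \<Rightarrow> real \<Rightarrow> real \<Rightarrow> ('a::euclidean_space \<Rightarrow> real) \<Rightarrow> ennreal" where
  "herz_slice_normp \<alpha> p q r t f =
     (\<Sum>\<^sub>\<infinity> k::int. ennreal (2 powr (real_of_int k * \<alpha> * p)) *
        ennpowr (slice_norm t r q (\<lambda>x. f x * indicator (Sk k) x)) p)"

definition herz_slice_space ::
  "real \<Rightarrow> real \<Rightarrow> real \<Rightarrow> real \<Rightarrow> real \<Rightarrow> ('a::euclidean_space \<Rightarrow> real) set" where
  "herz_slice_space \<alpha> p q r t =
     {f. f \<in> borel_measurable lebesgue \<and> herz_slice_normp \<alpha> p q r t f < \<infinity>}"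

definition dyadic_central_block ::
  "real \<Rightarrow> real \<Rightarrow> real \<Rightarrow> real \<Rightarrow> real \<Rightarrow> int \<Rightarrow> ('a::euclidean_space \<Rightarrow> real) \<Rightarrow> bool" where
  "dyadic_central_block C \<alpha> q r t k b \<longleftrightarrow>
     b \<in> borel_measurable lebesgue \<and>
     {x. b x \<noteq> 0} \<subseteq> Bk k \<and>
     slice_norm t r q b \<le> ennreal (C * (2 powr real_of_int k) powr (- \<alpha>))"

end

theory Submission
  imports Defs
begin


lemma sigma_finite_lebesgue: "sigma_finite_measure (lebesgue :: 'a::euclidean_space measure)"
proof -
  obtain A :: "'a set set" where A: "countable A" "A \<subseteq> sets lborel" "\<Union>A = space lborel"
     "\<forall>a\<in>A. emeasure lborel a \<noteq> \<infinity>"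
    using lborel.sigma_finite_countable by blast
  show ?thesis
    unfolding sigma_finite_measure_def
    by (rule exI[of _ A]) (use A in \<open>auto simp: emeasure_completion\<close>)
qed

lemma meas_joint:
  fixes u :: "'a::euclidean_space \<Rightarrow> real"
  assumes u: "u \<in> borel_measurable lebesgue" and t: "t > 0"
  shows "(\<lambda>x. \<integral>\<^sup>+ y. ennreal (indicator (ball x t) y * \<bar>u y\<bar> powr r) \<partial>lebesgue) \<in> borel_measurable lebesgue"
proof -
  interpret L: sigma_finite_measure "lebesgue :: 'a measure" by (rule sigma_finite_lebesgue)
  have id: "(\<lambda>x::'a. x) \<in> measurable lebesgue borel"
    by (simp add: measurable_completion)
  have d: "(\<lambda>z::'a\<times>'a. dist (fst z) (snd z)) \<in> borel_measurable (lebesgue \<Otimes>\<^sub>M lebesgue)"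
    using id by measurable
  have "(\<lambda>z::'a\<times>'a. ennreal (indicator (ball (fst z) t) (snd z) * \<bar>u (snd z)\<bar> powr r)) \<in> borel_measurable (lebesgue \<Otimes>\<^sub>M lebesgue)"
  proof -
    have "(\<lambda>z::'a\<times>'a. indicator (ball (fst z) t) (snd z) :: real) = (\<lambda>z. if dist (fst z) (snd z) < t then 1 else 0)"
      by (auto simp: indicator_def fun_eq_iff)
    moreover have "(\<lambda>z::'a\<times>'a. if dist (fst z) (snd z) < t then 1 else (0::real)) \<in> borel_measurable (lebesgue \<Otimes>\<^sub>M lebesgue)"
      using d by measurable
    moreover have "(\<lambda>z::'a\<times>'a. u (snd z)) \<in> borel_measurable (lebesgue \<Otimes>\<^sub>M lebesgue)"
      using u by measurable
    then have "(\<lambda>z::'a\<times>'a. \<bar>u (snd z)\<bar> powr r) \<in> borel_measurable (lebesgue \<Otimes>\<^sub>M lebesgue)"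
      by measurable
    ultimately have "(\<lambda>z::'a\<times>'a. indicator (ball (fst z) t) (snd z) * \<bar>u (snd z)\<bar> powr r) \<in> borel_measurable (lebesgue \<Otimes>\<^sub>M lebesgue)"
      by (intro borel_measurable_times) auto
    then show ?thesis by measurable
  qed
  then show ?thesis
    by (intro L.borel_measurable_nn_integral) (simp add: case_prod_beta')
qed


lemma ennpowr_top[simp]: "ennpowr top a = top"
  by (simp add: ennpowr_def)

lemma ennpowr_ennreal: "0 \<le> x \<Longrightarrow> ennpowr (ennreal x) a = ennreal (x powr a)"
  by (simp add: ennpowr_def)

lemma ennpowr_0[simp]: "ennpowr 0 a = 0"
  by (simp add: ennpowr_def)

lemma ennpowr_1[simp]: "ennpowr x 1 = x"
  by (cases x) (auto simp: ennpowr_def)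

lemma ennpowr_fin: "x \<noteq> \<infinity> \<Longrightarrow> ennpowr x a \<noteq> \<infinity>"
  by (simp add: ennpowr_def)

lemma ennpowr_less_top_iff: "a > 0 \<Longrightarrow> ennpowr x a < \<infinity> \<longleftrightarrow> x < \<infinity>"
  by (auto simp: ennpowr_def top.not_eq_extremum)

lemma ennpowr_eq_0_iff: "a > 0 \<Longrightarrow> ennpowr x a = 0 \<longleftrightarrow> x = 0"
  by (cases x) (auto simp: ennpowr_def)

lemma ennpowr_le_iff:
  assumes a: "a > 0"
  shows "ennpowr x a \<le> y \<longleftrightarrow> x \<le> ennpowr y (1/a)"
proof (cases x)
  case (real u)
  note xu = real
  show ?thesis
  proof (cases y)
    case (real v)
    have "u powr a \<le> v \<longleftrightarrow> u \<le> v powr (1/a)"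
    proof
      assume "u powr a \<le> v"
      then have "(u powr a) powr (1/a) \<le> v powr (1/a)"
        using a real xu by (intro powr_mono2) auto
      then show "u \<le> v powr (1/a)" using a real xu by (simp add: powr_powr)
    next
      assume "u \<le> v powr (1/a)"
      then have "u powr a \<le> (v powr (1/a)) powr a"
        using a real xu by (intro powr_mono2) auto
      then show "u powr a \<le> v" using a real xu by (simp add: powr_powr)
    qed
    then show ?thesis using real xu a
      by (simp add: ennpowr_ennreal ennreal_le_iff)
  next
    case top
    then show ?thesis using real by (simp add: ennpowr_def)
  qed
next
  case top
  then show ?thesis by (auto simp: ennpowr_def top_unique)
qed

lemma ennpowr_mono: "a \<ge> 0 \<Longrightarrow> x \<le> y \<Longrightarrow> ennpowr x a \<le> ennpowr y a"
  apply (cases x; cases y)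
  apply (auto simp: ennpowr_ennreal ennreal_le_iff top_unique intro!: powr_mono2)
  done

lemma ennpowr_powr: "a > 0 \<Longrightarrow> b > 0 \<Longrightarrow> ennpowr (ennpowr x a) b = ennpowr x (a * b)"
  by (cases x) (auto simp: ennpowr_ennreal powr_powr)

lemma ennpowr_inv1[simp]: "a > 0 \<Longrightarrow> ennpowr (ennpowr x a) (1/a) = x"
  by (simp add: ennpowr_powr)

lemma ennpowr_inv2[simp]: "a > 0 \<Longrightarrow> ennpowr (ennpowr x (1/a)) a = x"
  by (simp add: ennpowr_powr)

lemma ennpowr_mult:
  assumes a: "a > 0"
  shows "ennpowr (x * y) a = ennpowr x a * ennpowr y a"
proof (cases x; cases y)
  fix u v assume xy: "0 \<le> u" "x = ennreal u" "0 \<le> v" "y = ennreal v"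
  show ?thesis using xy by (simp add: ennreal_mult[symmetric] ennpowr_ennreal powr_mult)
next
  fix u assume xy: "0 \<le> u" "x = ennreal u" "y = top"
  then show ?thesis using a
    by (cases "u = 0") (auto simp: ennpowr_ennreal ennreal_mult_top)
next
  fix v assume xy: "x = top" "0 \<le> v" "y = ennreal v"
  then show ?thesis using a
    by (cases "v = 0") (auto simp: ennpowr_ennreal ennreal_top_mult)
next
  assume "x = top" "y = top" then show ?thesis by simp
qed

lemma ennpowr_SUP:
  assumes a: "a > 0"
  shows "ennpowr (SUP i\<in>I. X i) a = (SUP i\<in>I. ennpowr (X i) a)"
proof (rule antisym)
  show "ennpowr (SUP i\<in>I. X i) a \<le> (SUP i\<in>I. ennpowr (X i) a)"
    unfolding ennpowr_le_iff[OF a]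
  proof (rule SUP_least)
    fix i assume "i \<in> I"
    then have "ennpowr (X i) a \<le> (SUP i\<in>I. ennpowr (X i) a)" by (rule SUP_upper)
    then show "X i \<le> ennpowr (SUP i\<in>I. ennpowr (X i) a) (1 / a)"
      by (simp add: ennpowr_le_iff[OF a])
  qed
next
  show "(SUP i\<in>I. ennpowr (X i) a) \<le> ennpowr (SUP i\<in>I. X i) a"
    using a by (intro SUP_least ennpowr_mono SUP_upper) auto
qed

lemma borel_measurable_ennpowr[measurable]:
  assumes "g \<in> borel_measurable M"
  shows "(\<lambda>x. ennpowr (g x) a) \<in> borel_measurable M"
  unfolding ennpowr_def using assms by measurable



lemma convex_key:
  fixes s A B x y :: real
  assumes s: "s \<ge> 1" and A: "A > 0" and B: "B > 0" and x: "x \<ge> 0" and y: "y \<ge> 0"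
  shows "(x + y) powr s \<le> (A + B) powr (s - 1) * A powr (1 - s) * x powr s
                          + (A + B) powr (s - 1) * B powr (1 - s) * y powr s"
proof -
  have AB: "A + B > 0" using A B by simp
  have eA: "A powr (1 - s) * x powr s = A * (x / A) powr s"
    using A by (simp add: powr_divide powr_diff)
  have eB: "B powr (1 - s) * y powr s = B * (y / B) powr s"
    using B by (simp add: powr_divide powr_diff)
  have eAB: "(A + B) powr s = (A + B) powr (s - 1) * (A + B)"
    using AB by (simp add: powr_diff)
  have conv: "((x + y) / (A + B)) powr s \<le> A / (A + B) * (x / A) powr s + B / (A + B) * (y / B) powr s"
  proof (cases "x = 0 \<or> y = 0")
    case True
    then show ?thesis
    proof
      assume x0: "x = 0"
      have "(y / (A + B)) powr s \<le> (y / B) powr s"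
        using A B y s by (intro powr_mono2) (auto intro!: divide_left_mono)
      also have "\<dots> \<le> B / (A + B) * (y / B) powr s + (1 - B / (A + B)) * (y / B) powr s"
        by (simp add: algebra_simps)
      finally have *: "(y / (A + B)) powr s \<le> B / (A + B) * (y / B) powr s + (1 - B / (A + B)) * (y / B) powr s" .
      have "(y / (A + B)) powr s = (B / (A + B)) powr s * (y / B) powr s"
        using A B by (simp add: powr_divide)
      also have "\<dots> \<le> (B / (A + B)) * (y / B) powr s"
      proof (intro mult_right_mono)
        have "(B / (A + B)) powr s \<le> (B / (A + B)) powr 1"
          using A B s by (intro powr_mono') auto
        then show "(B / (A + B)) powr s \<le> B / (A + B)" using A B by simp
      qed simp
      finally show ?thesis using x0 A by simp
    next
      assume y0: "y = 0"
      have "(x / (A + B)) powr s = (A / (A + B)) powr s * (x / A) powr s"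
        using A B by (simp add: powr_divide)
      also have "\<dots> \<le> (A / (A + B)) * (x / A) powr s"
      proof (intro mult_right_mono)
        have "(A / (A + B)) powr s \<le> (A / (A + B)) powr 1"
          using A B s by (intro powr_mono') auto
        then show "(A / (A + B)) powr s \<le> A / (A + B)" using A B by simp
      qed simp
      finally show ?thesis using y0 B by simp
    qed
  next
    case False
    have cv: "convex_on {0<..} (\<lambda>z::real. z powr s)" using s by (rule powr_convex)
    let ?t = "B / (A + B)"
    have "(\<lambda>z. z powr s) ((1 - ?t) *\<^sub>R (x / A) + ?t *\<^sub>R (y / B)) \<le> (1 - ?t) * (x / A) powr s + ?t * (y / B) powr s"
      using False x y A B by (intro convex_onD[OF cv]) auto
    moreover have "(1 - ?t) = A / (A + B)" using AB by (simp add: field_simps)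
    moreover have "(1 - ?t) *\<^sub>R (x / A) + ?t *\<^sub>R (y / B) = (x + y) / (A + B)"
    proof -
      have "(1 - ?t) *\<^sub>R (x / A) = x / (A + B)" using A B AB by (simp add: field_simps)
      moreover have "?t *\<^sub>R (y / B) = y / (A + B)" using A B AB by (simp add: field_simps)
      ultimately show ?thesis by (simp add: add_divide_distrib)
    qed
    ultimately show ?thesis by simp
  qed
  have "(x + y) powr s = (A + B) powr s * ((x + y) / (A + B)) powr s"
    using AB x y by (simp add: powr_divide)
  also have "\<dots> \<le> (A + B) powr s * (A / (A + B) * (x / A) powr s + B / (A + B) * (y / B) powr s)"
    by (intro mult_left_mono conv) simp
  also have "\<dots> = (A + B) powr (s - 1) * (A * (x / A) powr s + B * (y / B) powr s)"
  proof -
    have gen: "S \<noteq> 0 \<Longrightarrow> S * (A / S * u + B / S * v) = A * u + B * v" for S u v :: real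
      by (simp add: field_simps)
    show ?thesis unfolding eAB using gen[of "A + B" "(x / A) powr s" "(y / B) powr s"] AB
      by (simp add: mult.assoc)
  qed
  also have "\<dots> = (A + B) powr (s - 1) * A powr (1 - s) * x powr s
                          + (A + B) powr (s - 1) * B powr (1 - s) * y powr s"
    unfolding eA[symmetric] eB[symmetric] by (simp add: algebra_simps)
  finally show ?thesis .
qed



definition Lnorm :: "'b measure \<Rightarrow> real \<Rightarrow> ('b \<Rightarrow> ennreal) \<Rightarrow> ennreal" where
  "Lnorm M s g = ennpowr (\<integral>\<^sup>+ x. ennpowr (g x) s \<partial>M) (1 / s)"

lemma Lnorm_le_iff:
  assumes "s > 0"
  shows "Lnorm M s g \<le> y \<longleftrightarrow> (\<integral>\<^sup>+ x. ennpowr (g x) s \<partial>M) \<le> ennpowr y s"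
  using assms unfolding Lnorm_def by (simp add: ennpowr_le_iff)

lemma Lnorm_mono:
  assumes "s > 0" "\<And>x. g x \<le> h x"
  shows "Lnorm M s g \<le> Lnorm M s h"
  unfolding Lnorm_def using assms
  by (intro ennpowr_mono nn_integral_mono) auto

lemma key_enn:
  fixes s A B :: real and u v :: ennreal
  assumes s: "s \<ge> 1" and A: "A > 0" and B: "B > 0"
  shows "ennpowr (u + v) s \<le> ennreal ((A + B) powr (s - 1) * A powr (1 - s)) * ennpowr u s
                          + ennreal ((A + B) powr (s - 1) * B powr (1 - s)) * ennpowr v s"
proof (cases u; cases v)
  fix x y assume xy: "0 \<le> x" "u = ennreal x" "0 \<le> y" "v = ennreal y"
  have "(x + y) powr s \<le> (A + B) powr (s - 1) * A powr (1 - s) * x powr s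
                          + (A + B) powr (s - 1) * B powr (1 - s) * y powr s"
    using convex_key[OF s A B xy(1) xy(3)] .
  then show ?thesis using xy
    by (simp add: ennpowr_ennreal ennreal_plus[symmetric] ennreal_mult[symmetric] del: ennreal_plus)
next
  fix x assume xy: "0 \<le> x" "u = ennreal x" "v = top"
  have "ennreal ((A + B) powr (s - 1) * B powr (1 - s)) * top = top"
    using A B by (subst ennreal_mult_top) auto
  then show ?thesis using xy by (simp add: top_unique)
next
  fix y assume xy: "u = top" "0 \<le> y" "v = ennreal y"
  have "ennreal ((A + B) powr (s - 1) * A powr (1 - s)) * top = top"
    using A B by (subst ennreal_mult_top) auto
  then show ?thesis using xy by (simp add: top_unique)
next
  assume xy: "u = top" "v = top"
  have "ennreal ((A + B) powr (s - 1) * A powr (1 - s)) * top = top"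
    using A B by (subst ennreal_mult_top) auto
  then show ?thesis using xy by (simp add: top_unique)
qed

lemma Lnorm_add_bound:
  fixes A B s :: real
  assumes s: "s \<ge> 1" and A: "A > 0" and B: "B > 0"
    and g[measurable]: "g \<in> borel_measurable M" and h[measurable]: "h \<in> borel_measurable M"
    and gA: "Lnorm M s g \<le> ennreal A" and hB: "Lnorm M s h \<le> ennreal B"
  shows "Lnorm M s (\<lambda>x. g x + h x) \<le> ennreal (A + B)"
proof -
  have s0: "s > 0" using s by simp
  define K1 where "K1 = (A + B) powr (s - 1) * A powr (1 - s)"
  define K2 where "K2 = (A + B) powr (s - 1) * B powr (1 - s)"
  have Ig: "(\<integral>\<^sup>+ x. ennpowr (g x) s \<partial>M) \<le> ennreal (A powr s)"
    using gA A s0 by (simp add: Lnorm_le_iff ennpowr_ennreal)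
  have Ih: "(\<integral>\<^sup>+ x. ennpowr (h x) s \<partial>M) \<le> ennreal (B powr s)"
    using hB B s0 by (simp add: Lnorm_le_iff ennpowr_ennreal)
  have "(\<integral>\<^sup>+ x. ennpowr (g x + h x) s \<partial>M)
        \<le> (\<integral>\<^sup>+ x. ennreal K1 * ennpowr (g x) s + ennreal K2 * ennpowr (h x) s \<partial>M)"
    unfolding K1_def K2_def by (intro nn_integral_mono key_enn[OF s A B])
  also have "\<dots> = ennreal K1 * (\<integral>\<^sup>+ x. ennpowr (g x) s \<partial>M) + ennreal K2 * (\<integral>\<^sup>+ x. ennpowr (h x) s \<partial>M)"
    by (simp add: nn_integral_add nn_integral_cmult)
  also have "\<dots> \<le> ennreal K1 * ennreal (A powr s) + ennreal K2 * ennreal (B powr s)"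
    by (intro add_mono mult_left_mono Ig Ih) auto
  also have "\<dots> = ennreal (K1 * A powr s + K2 * B powr s)"
    unfolding K1_def K2_def using A B
    by (simp add: ennreal_plus[symmetric] ennreal_mult[symmetric] del: ennreal_plus)
  also have "K1 * A powr s + K2 * B powr s = (A + B) powr s"
  proof -
    have a: "A powr (1 - s) * A powr s = A" using A by (simp add: powr_add[symmetric])
    have b: "B powr (1 - s) * B powr s = B" using B by (simp add: powr_add[symmetric])
    have c: "(A + B) powr (s - 1) * (A + B) = (A + B) powr s"
      using A B by (simp add: powr_diff)
    have "K1 * A powr s = (A + B) powr (s - 1) * (A powr (1 - s) * A powr s)"
      unfolding K1_def by (simp add: mult.assoc)
    also have "\<dots> = (A + B) powr (s - 1) * A" using a by simp
    finally have 1: "K1 * A powr s = (A + B) powr (s - 1) * A" .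
    have "K2 * B powr s = (A + B) powr (s - 1) * (B powr (1 - s) * B powr s)"
      unfolding K2_def by (simp add: mult.assoc)
    also have "\<dots> = (A + B) powr (s - 1) * B" using b by simp
    finally have 2: "K2 * B powr s = (A + B) powr (s - 1) * B" .
    show ?thesis unfolding 1 2 c[symmetric] by (simp add: algebra_simps)
  qed
  finally have "(\<integral>\<^sup>+ x. ennpowr (g x + h x) s \<partial>M) \<le> ennpowr (ennreal (A + B)) s"
    using A B by (simp add: ennpowr_ennreal del: ennreal_plus)
  then show ?thesis using s0 by (simp add: Lnorm_le_iff del: ennreal_plus)
qed

lemma Lnorm_add:
  assumes s: "s \<ge> 1"
    and g[measurable]: "g \<in> borel_measurable M" and h[measurable]: "h \<in> borel_measurable M"
  shows "Lnorm M s (\<lambda>x. g x + h x) \<le> Lnorm M s g + Lnorm M s h"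
proof (rule ennreal_le_epsilon)
  fix e :: real assume fin: "Lnorm M s g + Lnorm M s h < top" and e: "0 < e"
  have gf: "Lnorm M s g < top" and hf: "Lnorm M s h < top" using fin by auto
  define a where "a = enn2real (Lnorm M s g)"
  define b where "b = enn2real (Lnorm M s h)"
  have ga: "Lnorm M s g = ennreal a" using gf unfolding a_def by (simp add: ennreal_enn2real_if less_top)
  have hb: "Lnorm M s h = ennreal b" using hf unfolding b_def by (simp add: ennreal_enn2real_if less_top)
  have a0: "a \<ge> 0" "b \<ge> 0" unfolding a_def b_def by auto
  have "Lnorm M s (\<lambda>x. g x + h x) \<le> ennreal ((a + e/2) + (b + e/2))"
    by (rule Lnorm_add_bound[OF s _ _ g h]) (use a0 e ga hb in \<open>auto intro: ennreal_leI\<close>)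
  also have "\<dots> = Lnorm M s g + Lnorm M s h + ennreal e"
    using a0 e ga hb by (simp add: ennreal_plus[symmetric] del: ennreal_plus)
  finally show "Lnorm M s (\<lambda>x. g x + h x) \<le> Lnorm M s g + Lnorm M s h + ennreal e" .
qed

lemma Lnorm_sum:
  fixes g :: "nat \<Rightarrow> 'b \<Rightarrow> ennreal" and n :: nat
  assumes s: "s \<ge> 1" and g[measurable]: "\<And>i. g i \<in> borel_measurable M"
  shows "Lnorm M s (\<lambda>x. \<Sum>i<n. g i x) \<le> (\<Sum>i<n. Lnorm M s (g i))"
proof (induction n)
  case 0
  then show ?case using s by (simp add: Lnorm_def)
next
  case (Suc n)
  have "Lnorm M s (\<lambda>x. \<Sum>i<Suc n. g i x) = Lnorm M s (\<lambda>x. (\<Sum>i<n. g i x) + g n x)"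
    by simp
  also have "\<dots> \<le> Lnorm M s (\<lambda>x. \<Sum>i<n. g i x) + Lnorm M s (g n)"
    by (rule Lnorm_add[OF s]) auto
  also have "\<dots> \<le> (\<Sum>i<n. Lnorm M s (g i)) + Lnorm M s (g n)"
    using Suc by (intro add_right_mono)
  finally show ?case by simp
qed

lemma Lnorm_suminf:
  fixes g :: "nat \<Rightarrow> 'b \<Rightarrow> ennreal"
  assumes s: "s \<ge> 1" and g[measurable]: "\<And>i. g i \<in> borel_measurable M"
  shows "Lnorm M s (\<lambda>x. \<Sum>i. g i x) \<le> (\<Sum>i. Lnorm M s (g i))"
proof -
  have s0: "s > 0" using s by simp
  have "(\<integral>\<^sup>+ x. ennpowr (\<Sum>i. g i x) s \<partial>M) = (\<integral>\<^sup>+ x. (SUP n. ennpowr (\<Sum>i<n. g i x) s) \<partial>M)"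
    by (simp add: suminf_eq_SUP ennpowr_SUP[OF s0])
  also have "\<dots> = (SUP n. \<integral>\<^sup>+ x. ennpowr (\<Sum>i<n. g i x) s \<partial>M)"
  proof (rule nn_integral_monotone_convergence_SUP)
    show "incseq (\<lambda>n x. ennpowr (\<Sum>i<n. g i x) s)"
      using s0 by (auto simp: incseq_def le_fun_def intro!: ennpowr_mono sum_mono2)
  qed auto
  finally have eq: "(\<integral>\<^sup>+ x. ennpowr (\<Sum>i. g i x) s \<partial>M) = (SUP n. \<integral>\<^sup>+ x. ennpowr (\<Sum>i<n. g i x) s \<partial>M)" .
  have "Lnorm M s (\<lambda>x. \<Sum>i. g i x) = (SUP n. Lnorm M s (\<lambda>x. \<Sum>i<n. g i x))"
    unfolding Lnorm_def eq by (simp add: ennpowr_SUP s0)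
  also have "\<dots> \<le> (SUP n. (\<Sum>i<n. Lnorm M s (g i)))"
    by (intro SUP_mono) (auto intro: Lnorm_sum[OF s g])
  also have "\<dots> = (\<Sum>i. Lnorm M s (g i))"
    by (simp add: suminf_eq_SUP)
  finally show ?thesis .
qed

lemma Lnorm_cmult:
  assumes s: "s > 0" and g[measurable]: "g \<in> borel_measurable M"
  shows "Lnorm M s (\<lambda>x. c * g x) = c * Lnorm M s g"
proof -
  have "(\<integral>\<^sup>+ x. ennpowr (c * g x) s \<partial>M) = ennpowr c s * (\<integral>\<^sup>+ x. ennpowr (g x) s \<partial>M)"
    using s by (simp add: ennpowr_mult nn_integral_cmult)
  then show ?thesis unfolding Lnorm_def using s
    by (simp add: ennpowr_mult ennpowr_powr)
qed



lemma infsum_nat_ennreal: "(\<Sum>\<^sub>\<infinity>n::nat. h n) = (\<Sum>n. (h n :: ennreal))"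
proof -
  have "(\<Sum>\<^sub>\<infinity>n::nat. h n) = (SUP F\<in>{F. finite F \<and> F \<subseteq> UNIV}. sum h F)"
    by (rule nonneg_infsum_complete) simp
  also have "\<dots> = (SUP n. \<Sum>i<n. h i)"
  proof (rule antisym)
    show "(SUP F\<in>{F. finite F \<and> F \<subseteq> UNIV}. sum h F) \<le> (SUP n. \<Sum>i<n. h i)"
    proof (rule SUP_least)
      fix F :: "nat set" assume "F \<in> {F. finite F \<and> F \<subseteq> UNIV}"
      then have fin: "finite F" by simp
      then have "F \<subseteq> {..<Suc (Max F)}"
        by (auto simp: less_Suc_eq_le)
      then have "sum h F \<le> (\<Sum>i<Suc (Max F). h i)"
        by (intro sum_mono2) auto
      also have "\<dots> \<le> (SUP n. \<Sum>i<n. h i)" by (rule SUP_upper) simp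
      finally show "sum h F \<le> (SUP n. \<Sum>i<n. h i)" .
    qed
    show "(SUP n. \<Sum>i<n. h i) \<le> (SUP F\<in>{F. finite F \<and> F \<subseteq> UNIV}. sum h F)"
      by (rule SUP_least, rule SUP_upper) auto
  qed
  also have "\<dots> = (\<Sum>n. h n)" by (simp add: suminf_eq_SUP)
  finally show ?thesis .
qed

lemma infsum_int_ennreal: "(\<Sum>\<^sub>\<infinity>k::int. h k) = (\<Sum>n. (h (int_decode n) :: ennreal))"
proof -
  have "(\<Sum>\<^sub>\<infinity>n::nat. h (int_decode n)) = (\<Sum>\<^sub>\<infinity>k::int. h k)"
    using bij_int_decode by (intro infsum_reindex_bij_betw) (simp add: bij_betw_def)
  then show ?thesis by (simp add: infsum_nat_ennreal)
qed

lemma ball_measure_const: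
  fixes x :: "'a::euclidean_space"
  assumes "t \<ge> 0"
  shows "measure lebesgue (ball x t) = measure lebesgue (ball (0::'a) t)"
  using emeasure_lebesgue_ball_conv_unit_ball[OF assms, of x]
        emeasure_lebesgue_ball_conv_unit_ball[OF assms, of "0::'a"]
  by (simp add: measure_def)

definition Mx :: "real \<Rightarrow> 'a::euclidean_space \<Rightarrow> 'a measure" where
  "Mx t x = density lebesgue (\<lambda>y. ennreal (1 / measure lebesgue (ball x t)) * indicator (ball x t) y)"

lemma loc_avg_Lnorm:
  fixes f :: "'a::euclidean_space \<Rightarrow> real"
  assumes r: "r > 0" and f[measurable]: "f \<in> borel_measurable lebesgue"
  shows "loc_avg t r f x = Lnorm (Mx t x) r (\<lambda>y. ennreal \<bar>f y\<bar>)"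
proof -
  have m: "(\<lambda>y. ennpowr (ennreal \<bar>f y\<bar>) r) \<in> borel_measurable lebesgue" by measurable
  have bl: "ball x t \<in> sets lebesgue" using lmeasurable_ball fmeasurableD by blast
  have w[measurable]: "(\<lambda>y. ennreal (1 / measure lebesgue (ball x t)) * indicator (ball x t) y) \<in> borel_measurable lebesgue"
    using bl by (intro borel_measurable_times_ennreal borel_measurable_indicator) auto
  have "(\<integral>\<^sup>+ y. ennpowr (ennreal \<bar>f y\<bar>) r \<partial>Mx t x)
     = (\<integral>\<^sup>+ y. ennreal (1 / measure lebesgue (ball x t)) * (indicator (ball x t) y * ennpowr (ennreal \<bar>f y\<bar>) r) \<partial>lebesgue)"
    unfolding Mx_def by (subst nn_integral_density[OF w m]) (simp add: mult.assoc)
  also have "\<dots> = ennreal (1 / measure lebesgue (ball x t)) * (\<integral>\<^sup>+ y. indicator (ball x t) y * ennpowr (ennreal \<bar>f y\<bar>) r \<partial>lebesgue)"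
    by (rule nn_integral_cmult) (use bl m in \<open>intro borel_measurable_times_ennreal borel_measurable_indicator\<close>)
  also have "(\<integral>\<^sup>+ y. indicator (ball x t) y * ennpowr (ennreal \<bar>f y\<bar>) r \<partial>lebesgue) = (\<integral>\<^sup>+ y. ennreal (indicator (ball x t) y * \<bar>f y\<bar> powr r) \<partial>lebesgue)"
    by (intro nn_integral_cong) (simp add: ennpowr_ennreal indicator_def)
  finally show ?thesis unfolding loc_avg_def Lnorm_def by simp
qed

lemma loc_avg_measurable[measurable]:
  fixes u :: "'a::euclidean_space \<Rightarrow> real"
  assumes t: "t > 0" and u: "u \<in> borel_measurable lebesgue"
  shows "loc_avg t r u \<in> borel_measurable lebesgue"
proof -
  have "loc_avg t r u = (\<lambda>x. ennpowr (ennreal (1 / measure lebesgue (ball (0::'a) t)) *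
              (\<integral>\<^sup>+ y. ennreal (indicator (ball x t) y * \<bar>u y\<bar> powr r) \<partial>lebesgue)) (1 / r))"
  proof (rule ext)
    fix x
    show "loc_avg t r u x = ennpowr (ennreal (1 / measure lebesgue (ball (0::'a) t)) *
              (\<integral>\<^sup>+ y. ennreal (indicator (ball x t) y * \<bar>u y\<bar> powr r) \<partial>lebesgue)) (1 / r)"
      unfolding loc_avg_def ball_measure_const[of t x, OF less_imp_le[OF t]] ..
  qed
  moreover have "(\<lambda>x. \<integral>\<^sup>+ y. ennreal (indicator (ball x t) y * \<bar>u y\<bar> powr r) \<partial>lebesgue) \<in> borel_measurable lebesgue"
    by (rule meas_joint[OF u t])
  ultimately show ?thesis by simp
qed

lemma slice_Lnorm: "slice_norm t r q f = Lnorm lebesgue q (loc_avg t r f)"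
  by (simp add: slice_norm_def Lnorm_def)

lemma loc_avg_suminf:
  fixes F :: "'a::euclidean_space \<Rightarrow> real" and u :: "nat \<Rightarrow> 'a \<Rightarrow> real"
  assumes r: "r \<ge> 1" and F[measurable]: "F \<in> borel_measurable lebesgue"
    and u[measurable]: "\<And>n. u n \<in> borel_measurable lebesgue"
    and le: "\<And>y. ennreal \<bar>F y\<bar> \<le> (\<Sum>n. ennreal \<bar>u n y\<bar>)"
  shows "loc_avg t r F x \<le> (\<Sum>n. loc_avg t r (u n) x)"
proof -
  have r0: "r > 0" using r by simp
  have ms: "sets (Mx t x) = sets lebesgue" unfolding Mx_def by simp
  have mu: "(\<lambda>y. ennreal \<bar>u n y\<bar>) \<in> borel_measurable (Mx t x)" for n
    by (subst measurable_cong_sets[OF ms refl]) measurable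
  have "loc_avg t r F x = Lnorm (Mx t x) r (\<lambda>y. ennreal \<bar>F y\<bar>)"
    by (rule loc_avg_Lnorm[OF r0 F])
  also have "\<dots> \<le> Lnorm (Mx t x) r (\<lambda>y. \<Sum>n. ennreal \<bar>u n y\<bar>)"
    by (rule Lnorm_mono[OF r0 le])
  also have "\<dots> \<le> (\<Sum>n. Lnorm (Mx t x) r (\<lambda>y. ennreal \<bar>u n y\<bar>))"
    by (rule Lnorm_suminf[OF r mu])
  also have "\<dots> = (\<Sum>n. loc_avg t r (u n) x)"
    by (simp add: loc_avg_Lnorm[OF r0])
  finally show ?thesis .
qed

lemma slice_suminf:
  fixes F :: "'a::euclidean_space \<Rightarrow> real" and u :: "nat \<Rightarrow> 'a \<Rightarrow> real"
  assumes t: "t > 0" and r: "r \<ge> 1" and q: "q \<ge> 1" and F[measurable]: "F \<in> borel_measurable lebesgue"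
    and u[measurable]: "\<And>n. u n \<in> borel_measurable lebesgue"
    and le: "\<And>y. ennreal \<bar>F y\<bar> \<le> (\<Sum>n. ennreal \<bar>u n y\<bar>)"
  shows "slice_norm t r q F \<le> (\<Sum>n. slice_norm t r q (u n))"
proof -
  have q0: "q > 0" using q by simp
  have "slice_norm t r q F = Lnorm lebesgue q (loc_avg t r F)" by (rule slice_Lnorm)
  also have "\<dots> \<le> Lnorm lebesgue q (\<lambda>x. \<Sum>n. loc_avg t r (u n) x)"
    by (rule Lnorm_mono[OF q0 loc_avg_suminf[OF r F u le]])
  also have "\<dots> \<le> (\<Sum>n. Lnorm lebesgue q (loc_avg t r (u n)))"
    by (rule Lnorm_suminf[OF q]) (rule loc_avg_measurable[OF t u])
  also have "\<dots> = (\<Sum>n. slice_norm t r q (u n))" by (simp add: slice_Lnorm)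
  finally show ?thesis .
qed

lemma slice_infsum_int:
  fixes F :: "'a::euclidean_space \<Rightarrow> real" and u :: "int \<Rightarrow> 'a \<Rightarrow> real"
  assumes t: "t > 0" and r: "r \<ge> 1" and q: "q \<ge> 1" and F[measurable]: "F \<in> borel_measurable lebesgue"
    and u[measurable]: "\<And>k. u k \<in> borel_measurable lebesgue"
    and le: "\<And>y. ennreal \<bar>F y\<bar> \<le> (\<Sum>\<^sub>\<infinity>k. ennreal \<bar>u k y\<bar>)"
  shows "slice_norm t r q F \<le> (\<Sum>\<^sub>\<infinity>k. slice_norm t r q (u k))"
proof -
  have le': "ennreal \<bar>F y\<bar> \<le> (\<Sum>n. ennreal \<bar>u (int_decode n) y\<bar>)" for y
    using le[of y] unfolding infsum_int_ennreal[of "\<lambda>k. ennreal \<bar>u k y\<bar>"] .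
  have "slice_norm t r q F \<le> (\<Sum>n. slice_norm t r q (u (int_decode n)))"
    by (rule slice_suminf[OF t r q F u le'])
  also have "\<dots> = (\<Sum>\<^sub>\<infinity>k. slice_norm t r q (u k))"
    by (rule infsum_int_ennreal[of "\<lambda>k. slice_norm t r q (u k)", symmetric])
  finally show ?thesis .
qed

lemma slice_mono:
  assumes "\<And>y. \<bar>F y\<bar> \<le> \<bar>G y\<bar>" and r: "r > 0" and q: "q > 0"
  shows "slice_norm t r q F \<le> slice_norm t r q G"
proof -
  have "loc_avg t r F x \<le> loc_avg t r G x" for x
    unfolding loc_avg_def using assms
    by (intro ennpowr_mono mult_left_mono nn_integral_mono ennreal_leI mult_left_mono powr_mono2)
       auto
  then show ?thesis unfolding slice_norm_def using q
    by (intro ennpowr_mono nn_integral_mono) auto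
qed

lemma slice_cmult:
  fixes u :: "'a::euclidean_space \<Rightarrow> real"
  assumes t: "t > 0" and r: "r > 0" and q: "q > 0" and u[measurable]: "u \<in> borel_measurable lebesgue"
  shows "slice_norm t r q (\<lambda>y. c * u y) = ennreal \<bar>c\<bar> * slice_norm t r q u"
proof -
  have ms: "sets (Mx t x) = sets lebesgue" for x unfolding Mx_def by simp
  have mu: "(\<lambda>y. ennreal \<bar>u y\<bar>) \<in> borel_measurable (Mx t x)" for x
    by (subst measurable_cong_sets[OF ms refl]) measurable
  have "loc_avg t r (\<lambda>y. c * u y) x = ennreal \<bar>c\<bar> * loc_avg t r u x" for x
  proof -
    have "loc_avg t r (\<lambda>y. c * u y) x = Lnorm (Mx t x) r (\<lambda>y. ennreal \<bar>c * u y\<bar>)"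
      by (rule loc_avg_Lnorm[OF r]) simp
    also have "\<dots> = Lnorm (Mx t x) r (\<lambda>y. ennreal \<bar>c\<bar> * ennreal \<bar>u y\<bar>)"
      by (simp add: abs_mult ennreal_mult)
    also have "\<dots> = ennreal \<bar>c\<bar> * Lnorm (Mx t x) r (\<lambda>y. ennreal \<bar>u y\<bar>)"
      by (rule Lnorm_cmult[OF r mu])
    also have "\<dots> = ennreal \<bar>c\<bar> * loc_avg t r u x"
      by (simp add: loc_avg_Lnorm[OF r u])
    finally show ?thesis .
  qed
  then have "loc_avg t r (\<lambda>y. c * u y) = (\<lambda>x. ennreal \<bar>c\<bar> * loc_avg t r u x)"
    by (rule ext)
  then have "slice_norm t r q (\<lambda>y. c * u y) = Lnorm lebesgue q (\<lambda>x. ennreal \<bar>c\<bar> * loc_avg t r u x)"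
    by (simp add: slice_Lnorm)
  also have "\<dots> = ennreal \<bar>c\<bar> * slice_norm t r q u"
    by (simp add: Lnorm_cmult[OF q loc_avg_measurable[OF t u]] slice_Lnorm)
  finally show ?thesis .
qed

lemma slice_AE:
  assumes "AE y in lebesgue. F y = G y"
  shows "slice_norm t r q F = slice_norm t r q G"
proof -
  have "loc_avg t r F x = loc_avg t r G x" for x
    unfolding loc_avg_def
    by (rule arg_cong2[where f=ennpowr], rule arg_cong2[where f=times], rule refl,
        rule nn_integral_cong_AE) (use assms in auto)
  then show ?thesis by (simp add: slice_norm_def)
qed

lemma slice_zero:
  assumes "\<And>y. F y = 0" and q: "q > 0"
  shows "slice_norm t r q F = 0"
  using assms by (simp add: slice_norm_def loc_avg_def)



lemma ennreal_infsum_real: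
  fixes g :: "'b \<Rightarrow> real"
  assumes nn: "\<And>x. x \<in> A \<Longrightarrow> g x \<ge> 0" and sm: "g summable_on A"
  shows "ennreal (infsum g A) = (\<Sum>\<^sub>\<infinity>x\<in>A. ennreal (g x))"
proof -
  have "ennreal (infsum g A) = (SUP F\<in>{F. finite F \<and> F \<subseteq> A}. ennreal (sum g F))"
    by (rule infsum_nonneg_is_SUPREMUM_ennreal[OF sm nn])
  also have "\<dots> = (SUP F\<in>{F. finite F \<and> F \<subseteq> A}. (\<Sum>x\<in>F. ennreal (g x)))"
    using nn by (intro SUP_cong refl) (auto simp: subset_eq)
  also have "\<dots> = (\<Sum>\<^sub>\<infinity>x\<in>A. ennreal (g x))"
    by (rule nonneg_infsum_complete[symmetric]) simp
  finally show ?thesis .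
qed

lemma finite_sum_le_infsum_ennreal:
  fixes h :: "'b \<Rightarrow> ennreal"
  assumes "finite F" "F \<subseteq> A"
  shows "sum h F \<le> (\<Sum>\<^sub>\<infinity>x\<in>A. h x)"
  using assms by (subst nonneg_infsum_complete) (auto intro!: SUP_upper)

lemma single_le_infsum_ennreal:
  fixes h :: "'b \<Rightarrow> ennreal"
  shows "h k \<le> (\<Sum>\<^sub>\<infinity>x. h x)"
  using finite_sum_le_infsum_ennreal[of "{k}" UNIV h] by simp

lemma summable_from_ennreal:
  fixes g :: "'b \<Rightarrow> real"
  assumes nn: "\<And>x. g x \<ge> 0" and fin: "(\<Sum>\<^sub>\<infinity>x\<in>A. ennreal (g x)) < \<infinity>"
  shows "g summable_on A"
proof (rule nonneg_bdd_above_summable_on)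
  show "bdd_above (sum g ` {F. F \<subseteq> A \<and> finite F})"
  proof (rule bdd_aboveI2)
    fix F assume F: "F \<in> {F. F \<subseteq> A \<and> finite F}"
    have "ennreal (sum g F) = (\<Sum>x\<in>F. ennreal (g x))" using nn by simp
    also have "\<dots> \<le> (\<Sum>\<^sub>\<infinity>x\<in>A. ennreal (g x))"
      using F by (intro finite_sum_le_infsum_ennreal) auto
    finally have "enn2real (ennreal (sum g F)) \<le> enn2real (\<Sum>\<^sub>\<infinity>x\<in>A. ennreal (g x))"
      using fin by (intro enn2real_mono) auto
    then show "sum g F \<le> enn2real (\<Sum>\<^sub>\<infinity>x\<in>A. ennreal (g x))"
      using nn by (simp add: sum_nonneg)
  qed
qed (use nn in auto)

lemma shift_int_infsum:
  fixes h :: "int \<Rightarrow> ennreal"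
  shows "(\<Sum>\<^sub>\<infinity>k. if j \<le> k then h k else 0) = (\<Sum>m. h (j + int m))"
proof -
  have "(\<Sum>\<^sub>\<infinity>k. if j \<le> k then h k else 0) = (\<Sum>\<^sub>\<infinity>k\<in>{j..}. h k)"
    by (rule infsum_cong_neutral) auto
  also have "{j..} = (\<lambda>m::nat. j + int m) ` UNIV"
  proof (auto simp: image_iff)
    fix k assume "j \<le> k"
    then show "\<exists>m. k = j + int m" by (intro exI[of _ "nat (k - j)"]) auto
  qed
  also have "(\<Sum>\<^sub>\<infinity>k\<in>(\<lambda>m::nat. j + int m) ` UNIV. h k) = (\<Sum>\<^sub>\<infinity>m::nat. h (j + int m))"
    by (subst infsum_reindex) (auto simp: inj_on_def o_def)
  also have "\<dots> = (\<Sum>m. h (j + int m))" by (rule infsum_nat_ennreal)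
  finally show ?thesis .
qed

lemma infsum_int_nn_integral:
  fixes h :: "int \<Rightarrow> ennreal"
  shows "(\<Sum>\<^sub>\<infinity>k. h k) = (\<integral>\<^sup>+ k. h k \<partial>count_space UNIV)"
proof -
  have "(\<integral>\<^sup>+ k. h k \<partial>count_space UNIV) = (\<integral>\<^sup>+ n. h (int_decode n) \<partial>count_space UNIV)"
    by (rule nn_integral_bij_count_space[symmetric]) (use bij_int_decode in \<open>simp add: bij_betw_def\<close>)
  also have "\<dots> = (\<Sum>n. h (int_decode n))" by (rule nn_integral_count_space_nat)
  finally show ?thesis by (simp add: infsum_int_ennreal)
qed

lemma subadd_real:
  fixes x y p :: real
  assumes "x \<ge> 0" "y \<ge> 0" "0 < p" "p \<le> 1"
  shows "(x + y) powr p \<le> x powr p + y powr p"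
proof (cases "x + y = 0")
  case True
  then show ?thesis using assms by simp
next
  case False
  then have s: "x + y > 0" using assms by simp
  have z: "z \<le> z powr p" if "0 \<le> z" "z \<le> 1" for z :: real
  proof (cases "z = 0")
    case False
    then have "z powr 1 \<le> z powr p" using that assms by (intro powr_mono') auto
    then show ?thesis using False that by simp
  qed simp
  have "x powr p = (x + y) powr p * (x / (x + y)) powr p"
    using s assms by (simp add: powr_divide)
  moreover have "y powr p = (x + y) powr p * (y / (x + y)) powr p"
    using s assms by (simp add: powr_divide)
  ultimately have "x powr p + y powr p = (x + y) powr p * ((x / (x + y)) powr p + (y / (x + y)) powr p)"
    by (simp add: algebra_simps)
  also have "\<dots> \<ge> (x + y) powr p * (x / (x + y) + y / (x + y))"
    using s assms by (intro mult_left_mono add_mono z) auto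
  moreover have "x / (x + y) + y / (x + y) = 1" using s by (simp add: add_divide_distrib[symmetric])
  ultimately show ?thesis by simp
qed

lemma subadd_enn:
  fixes x y :: ennreal
  assumes "0 < p" "p \<le> 1"
  shows "ennpowr (x + y) p \<le> ennpowr x p + ennpowr y p"
  using assms by (cases x; cases y) (auto simp: ennpowr_ennreal subadd_real simp flip: ennreal_plus)

lemma subadd_suminf:
  fixes x :: "nat \<Rightarrow> ennreal"
  assumes p: "0 < p" "p \<le> 1"
  shows "ennpowr (\<Sum>m. x m) p \<le> (\<Sum>m. ennpowr (x m) p)"
proof -
  have fin: "ennpowr (\<Sum>m<n. x m) p \<le> (\<Sum>m<n. ennpowr (x m) p)" for n
  proof (induction n)
    case 0 then show ?case by simp
  next
    case (Suc n)
    have "ennpowr (\<Sum>m<Suc n. x m) p \<le> ennpowr (\<Sum>m<n. x m) p + ennpowr (x n) p"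
      using subadd_enn[OF p] by simp
    also have "\<dots> \<le> (\<Sum>m<n. ennpowr (x m) p) + ennpowr (x n) p"
      using Suc by (intro add_right_mono)
    finally show ?case by simp
  qed
  have "ennpowr (\<Sum>m. x m) p = (SUP n. ennpowr (\<Sum>m<n. x m) p)"
    by (simp add: suminf_eq_SUP ennpowr_SUP[OF p(1)])
  also have "\<dots> \<le> (SUP n. (\<Sum>m<n. ennpowr (x m) p))"
    by (intro SUP_mono) (use fin in auto)
  also have "\<dots> = (\<Sum>m. ennpowr (x m) p)" by (simp add: suminf_eq_SUP)
  finally show ?thesis .
qed

lemma Sk_iff:
  fixes x :: "'a::euclidean_space"
  shows "x \<in> Sk k \<longleftrightarrow> x \<noteq> 0 \<and> k = \<lceil>log 2 (norm x)\<rceil>"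
proof (cases "x = 0")
  case True
  then show ?thesis by (auto simp: Sk_def Bk_def)
next
  case False
  then have n: "norm x > 0" by simp
  have "x \<in> Sk k \<longleftrightarrow> 2 powr (real_of_int (k - 1)) < norm x \<and> norm x \<le> 2 powr (real_of_int k)"
    by (auto simp: Sk_def Bk_def)
  also have "\<dots> \<longleftrightarrow> real_of_int k - 1 < log 2 (norm x) \<and> log 2 (norm x) \<le> real_of_int k"
    using n by (simp add: less_log_iff log_le_iff)
  also have "\<dots> \<longleftrightarrow> k = \<lceil>log 2 (norm x)\<rceil>"
    by (simp add: ceiling_eq_iff eq_commute[of k])
  finally show ?thesis using False by simp
qed

lemma geom_ennreal_finite:
  fixes c \<rho> :: real
  assumes "c \<ge> 0" "0 \<le> \<rho>" "\<rho> < 1"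
  shows "(\<Sum>m. ennreal (c * \<rho> ^ m)) < \<infinity>"
proof -
  have "summable (\<lambda>m. c * \<rho> ^ m)" using assms by (intro summable_mult summable_geometric) auto
  then have "(\<Sum>m. ennreal (c * \<rho> ^ m)) = ennreal (\<Sum>m. c * \<rho> ^ m)"
    using assms by (intro suminf_ennreal2) auto
  then show ?thesis by simp
qed



lemma Bk_sets: "(Bk k :: 'a::euclidean_space set) \<in> sets lebesgue"
proof -
  have "(Bk k :: 'a set) = cball 0 (2 powr real_of_int k)"
    by (auto simp: Bk_def cball_def dist_norm)
  then show ?thesis using lmeasurable_cball fmeasurableD by metis
qed

lemma Sk_sets: "(Sk k :: 'a::euclidean_space set) \<in> sets lebesgue"
  unfolding Sk_def using Bk_sets by (intro sets.Diff) auto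

lemma pw: "(b::real) > 0 \<Longrightarrow> b powr (c * real m) = (b powr c) ^ m"
  by (simp add: powr_powr[symmetric] powr_realpow)

lemma shift_cs:
  fixes h :: "int \<Rightarrow> ennreal"
  shows "(\<integral>\<^sup>+ j. h (j + int m) \<partial>count_space UNIV) = (\<integral>\<^sup>+ j. h j \<partial>count_space UNIV)"
proof (rule nn_integral_bij_count_space)
  show "bij_betw (\<lambda>j. j + int m) UNIV UNIV"
    by (rule bij_betw_byWitness[where f'="\<lambda>j. j - int m"]) auto
qed

lemma dir21:
  fixes f :: "'a::euclidean_space \<Rightarrow> real" and lam :: "int \<Rightarrow> real" and b :: "int \<Rightarrow> 'a \<Rightarrow> real"
    and \<alpha> t p r q C :: real
  assumes \<alpha>: "\<alpha> > 0" and t: "t > 0" and p: "p > 0" and r: "r > 1" and q: "q \<ge> 1" and C: "C > 0"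
    and f[measurable]: "f \<in> borel_measurable lebesgue"
    and summ: "(\<lambda>k. \<bar>lam k\<bar> powr p) summable_on UNIV"
    and blk: "\<forall>k. dyadic_central_block C \<alpha> q r t k (b k)"
    and hs: "\<forall>x. ((\<lambda>k. lam k * b k x) has_sum f x) UNIV"
  shows "herz_slice_normp \<alpha> p q r t f < \<infinity>"
proof -
  have r1: "r \<ge> 1" and r0: "r > 0" and q0: "q > 0" using r q by auto
  have bm[measurable]: "b k \<in> borel_measurable lebesgue" for k
    using blk by (simp add: dyadic_central_block_def)
  have bsupp: "b k x \<noteq> 0 \<Longrightarrow> x \<in> Bk k" for k x
    using blk by (auto simp: dyadic_central_block_def)
  have bnorm: "slice_norm t r q (b k) \<le> ennreal (C * (2 powr real_of_int k) powr (- \<alpha>))" for k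
    using blk by (simp add: dyadic_central_block_def)
  have Skm[measurable]: "Sk j \<in> sets lebesgue" for j :: int by (rule Sk_sets)
  define a where "a k = \<bar>lam k\<bar>" for k
  have a0: "a k \<ge> 0" for k unfolding a_def by simp
  define N where "N j = slice_norm t r q (\<lambda>x. f x * indicator (Sk j) x)" for j
  define \<rho> where "\<rho> = 2 powr (- \<alpha>)"
  have \<rho>0: "\<rho> > 0" and \<rho>1: "\<rho> < 1" unfolding \<rho>_def using \<alpha> by (auto intro: powr_less_one)
  define G where "G m j = ennreal (C * \<rho> ^ m * a (j + int m))" for m :: nat and j :: int
  have Nbound: "N j \<le> (\<Sum>m. ennreal (a (j + int m) * C * 2 powr (- (real_of_int (j + int m) * \<alpha>))))" for j
  proof -
    have pt: "ennreal \<bar>f y * indicator (Sk j) y\<bar> \<le> (\<Sum>\<^sub>\<infinity>k. ennreal \<bar>lam k * b k y * indicator (Sk j) y\<bar>)" for y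
    proof (cases "y \<in> Sk j")
      case False then show ?thesis by simp
    next
      case True
      have sm: "(\<lambda>k. lam k * b k y) summable_on UNIV" and eq: "infsum (\<lambda>k. lam k * b k y) UNIV = f y"
        using hs by (auto simp: has_sum_iff)
      have abs: "(\<lambda>k. norm (lam k * b k y)) summable_on UNIV"
        by (rule summable_on_iff_abs_summable_on_real[THEN iffD1, OF sm])
      have "\<bar>f y\<bar> \<le> infsum (\<lambda>k. norm (lam k * b k y)) UNIV"
        using norm_infsum_bound[OF abs] eq by simp
      then have "ennreal \<bar>f y\<bar> \<le> ennreal (infsum (\<lambda>k. norm (lam k * b k y)) UNIV)"
        by (rule ennreal_leI)
      also have "\<dots> = (\<Sum>\<^sub>\<infinity>k. ennreal (norm (lam k * b k y)))"
        by (rule ennreal_infsum_real) (use abs in auto)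
      finally show ?thesis using True by simp
    qed
    have step2: "N j \<le> (\<Sum>\<^sub>\<infinity>k. slice_norm t r q (\<lambda>x. lam k * b k x * indicator (Sk j) x))"
      unfolding N_def by (rule slice_infsum_int[OF t r1 q _ _ pt]) auto
    have step3: "slice_norm t r q (\<lambda>x. lam k * b k x * indicator (Sk j) x)
        \<le> (if j \<le> k then ennreal (a k * C * 2 powr (- (real_of_int k * \<alpha>))) else 0)" for k
    proof (cases "j \<le> k")
      case False
      have "lam k * b k x * indicator (Sk j) x = 0" for x
      proof (rule ccontr)
        assume ne: "lam k * b k x * indicator (Sk j) x \<noteq> 0"
        then have "b k x \<noteq> 0" "x \<in> Sk j" by (auto simp: indicator_def split: if_splits)
        then have "norm x \<le> 2 powr real_of_int k" "2 powr real_of_int (j - 1) < norm x"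
          using bsupp by (auto simp: Bk_def Sk_def)
        moreover have "2 powr real_of_int k \<le> 2 powr real_of_int (j - 1)"
          using False by (intro powr_mono) auto
        ultimately show False by simp
      qed
      then show ?thesis using False q0 by (simp add: slice_zero)
    next
      case True
      have "slice_norm t r q (\<lambda>x. lam k * b k x * indicator (Sk j) x)
          = slice_norm t r q (\<lambda>x. lam k * (b k x * indicator (Sk j) x))"
        by (simp add: mult.assoc)
      also have "\<dots> = ennreal \<bar>lam k\<bar> * slice_norm t r q (\<lambda>x. b k x * indicator (Sk j) x)"
        by (rule slice_cmult[OF t r0 q0]) measurable
      also have "\<dots> \<le> ennreal \<bar>lam k\<bar> * slice_norm t r q (b k)"
        by (intro mult_left_mono slice_mono[OF _ r0 q0]) (auto simp: abs_mult split: split_indicator)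
      also have "\<dots> \<le> ennreal \<bar>lam k\<bar> * ennreal (C * (2 powr real_of_int k) powr (- \<alpha>))"
        by (intro mult_left_mono bnorm) auto
      also have "\<dots> = ennreal (a k * C * 2 powr (- (real_of_int k * \<alpha>)))"
        unfolding a_def using C by (simp add: ennreal_mult'[symmetric] powr_powr mult.assoc)
      finally show ?thesis using True by simp
    qed
    have "N j \<le> (\<Sum>\<^sub>\<infinity>k. (if j \<le> k then ennreal (a k * C * 2 powr (- (real_of_int k * \<alpha>))) else 0))"
    proof (rule order_trans[OF step2], rule infsum_mono)
      fix k :: int
      show "slice_norm t r q (\<lambda>x. lam k * b k x * indicator (Sk j) x)
        \<le> (if j \<le> k then ennreal (a k * C * 2 powr (- (real_of_int k * \<alpha>))) else 0)"
        by (rule step3)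
    qed (rule nonneg_summable_on_complete, simp)+
    also have "\<dots> = (\<Sum>m. ennreal (a (j + int m) * C * 2 powr (- (real_of_int (j + int m) * \<alpha>))))"
      by (rule shift_int_infsum)
    finally show ?thesis .
  qed
  have tmb: "ennreal (2 powr (real_of_int j * \<alpha> * p)) * ennpowr (N j) p \<le> ennpowr (\<Sum>m. G m j) p" for j
  proof -
    have e1: "ennreal (2 powr (real_of_int j * \<alpha> * p)) = ennpowr (ennreal (2 powr (real_of_int j * \<alpha>))) p"
      by (simp add: ennpowr_ennreal powr_powr)
    have e2: "ennreal (2 powr (real_of_int j * \<alpha>)) * ennreal (a (j + int m) * C * 2 powr (- (real_of_int (j + int m) * \<alpha>)))
              = G m j" for m
    proof -
      have "2 powr (real_of_int j * \<alpha>) * (a (j + int m) * C * 2 powr (- (real_of_int (j + int m) * \<alpha>)))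
          = C * (2 powr (real_of_int j * \<alpha>) * 2 powr (- (real_of_int (j + int m) * \<alpha>))) * a (j + int m)"
        by (simp add: algebra_simps)
      also have "2 powr (real_of_int j * \<alpha>) * 2 powr (- (real_of_int (j + int m) * \<alpha>)) = 2 powr (- \<alpha> * real m)"
        by (simp add: powr_add[symmetric] algebra_simps)
      also have "\<dots> = \<rho> ^ m" unfolding \<rho>_def by (rule pw) simp
      finally have X: "2 powr (real_of_int j * \<alpha>) * (a (j + int m) * C * 2 powr (- (real_of_int (j + int m) * \<alpha>)))
          = C * \<rho> ^ m * a (j + int m)" .
      have "ennreal (2 powr (real_of_int j * \<alpha>)) * ennreal (a (j + int m) * C * 2 powr (- (real_of_int (j + int m) * \<alpha>)))
          = ennreal (2 powr (real_of_int j * \<alpha>) * (a (j + int m) * C * 2 powr (- (real_of_int (j + int m) * \<alpha>))))"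
        by (rule ennreal_mult'[symmetric]) simp
      also have "\<dots> = G m j" unfolding G_def X ..
      finally show ?thesis .
    qed
    have "ennreal (2 powr (real_of_int j * \<alpha> * p)) * ennpowr (N j) p
        = ennpowr (ennreal (2 powr (real_of_int j * \<alpha>)) * N j) p"
      unfolding e1 using p by (simp add: ennpowr_mult)
    also have "\<dots> \<le> ennpowr (ennreal (2 powr (real_of_int j * \<alpha>)) *
         (\<Sum>m. ennreal (a (j + int m) * C * 2 powr (- (real_of_int (j + int m) * \<alpha>))))) p"
      using p by (intro ennpowr_mono mult_left_mono Nbound) auto
    also have "\<dots> = ennpowr (\<Sum>m. G m j) p"
      by (subst ennreal_suminf_cmult[symmetric]) (simp only: e2)
    finally show ?thesis .
  qed
  have H: "herz_slice_normp \<alpha> p q r t f \<le> (\<integral>\<^sup>+ j. ennpowr (\<Sum>m. G m j) p \<partial>count_space UNIV)"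
    unfolding herz_slice_normp_def infsum_int_nn_integral[symmetric]
    by (intro infsum_mono) (auto simp: N_def[symmetric] tmb intro: nonneg_summable_on_complete)
  define S where "S = (\<integral>\<^sup>+ j. ennreal (a j powr p) \<partial>count_space UNIV)"
  have Sfin: "S < \<infinity>"
  proof -
    have "S = (\<Sum>\<^sub>\<infinity>j. ennreal (a j powr p))" unfolding S_def by (simp add: infsum_int_nn_integral)
    also have "\<dots> = ennreal (infsum (\<lambda>j. a j powr p) UNIV)"
      by (rule ennreal_infsum_real[symmetric]) (use summ in \<open>auto simp: a_def\<close>)
    finally show ?thesis by simp
  qed
  have Gsplit: "G m j = ennreal (C * \<rho> ^ m) * ennreal (a (j + int m))" for m j
    unfolding G_def using C \<rho>0 by (simp add: ennreal_mult'[symmetric])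
  show ?thesis
  proof (cases "p \<ge> 1")
    case True
    let ?cs = "count_space (UNIV :: int set)"
    have L1: "(\<integral>\<^sup>+ j. ennpowr (\<Sum>m. G m j) p \<partial>?cs) = ennpowr (Lnorm ?cs p (\<lambda>j. \<Sum>m. G m j)) p"
      unfolding Lnorm_def using p by simp
    have L2: "Lnorm ?cs p (\<lambda>j. \<Sum>m. G m j) \<le> (\<Sum>m. Lnorm ?cs p (G m))"
      by (rule Lnorm_suminf[OF True]) simp
    have "(\<Sum>m. Lnorm ?cs p (G m)) = (\<Sum>m. ennreal (C * \<rho> ^ m) * Lnorm ?cs p (\<lambda>j. ennreal (a j)))"
    proof (rule suminf_cong)
      fix m
      have "Lnorm ?cs p (G m) = Lnorm ?cs p (\<lambda>j. ennreal (C * \<rho> ^ m) * ennreal (a (j + int m)))"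
        by (rule arg_cong[where f="Lnorm ?cs p"]) (rule ext, rule Gsplit)
      also have "\<dots> = ennreal (C * \<rho> ^ m) * Lnorm ?cs p (\<lambda>j. ennreal (a (j + int m)))"
        by (rule Lnorm_cmult[OF p]) simp
      also have "Lnorm ?cs p (\<lambda>j. ennreal (a (j + int m))) = Lnorm ?cs p (\<lambda>j. ennreal (a j))"
        unfolding Lnorm_def using shift_cs[of "\<lambda>j. ennpowr (ennreal (a j)) p" m] by simp
      finally show "Lnorm ?cs p (G m) = ennreal (C * \<rho> ^ m) * Lnorm ?cs p (\<lambda>j. ennreal (a j))" .
    qed
    also have "\<dots> = (\<Sum>m. ennreal (C * \<rho> ^ m)) * Lnorm ?cs p (\<lambda>j. ennreal (a j))"
      by (simp add: mult.commute[of _ "Lnorm ?cs p (\<lambda>j. ennreal (a j))"])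
    also have "\<dots> < \<infinity>"
    proof -
      have "Lnorm ?cs p (\<lambda>j. ennreal (a j)) = ennpowr S (1 / p)"
        unfolding Lnorm_def S_def using a0 by (simp add: ennpowr_ennreal)
      then have "Lnorm ?cs p (\<lambda>j. ennreal (a j)) < \<infinity>" using Sfin p ennpowr_less_top_iff[of "1/p" S] by simp
      moreover have "(\<Sum>m. ennreal (C * \<rho> ^ m)) < \<infinity>"
        using C \<rho>0 \<rho>1 by (intro geom_ennreal_finite) auto
      ultimately show ?thesis by (simp add: ennreal_mult_less_top)
    qed
    finally have "Lnorm ?cs p (\<lambda>j. \<Sum>m. G m j) < \<infinity>" using L2 by (rule le_less_trans[rotated])
    then have "(\<integral>\<^sup>+ j. ennpowr (\<Sum>m. G m j) p \<partial>?cs) < \<infinity>"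
      unfolding L1 using p ennpowr_less_top_iff[of p "Lnorm ?cs p (\<lambda>j. \<Sum>m. G m j)"] by simp
    then show ?thesis using H by (rule le_less_trans[rotated])
  next
    case False
    let ?cs = "count_space (UNIV :: int set)"
    have "(\<integral>\<^sup>+ j. ennpowr (\<Sum>m. G m j) p \<partial>?cs) \<le> (\<integral>\<^sup>+ j. (\<Sum>m. ennpowr (G m j) p) \<partial>?cs)"
      using False p by (intro nn_integral_mono subadd_suminf) auto
    also have "\<dots> = (\<Sum>m. \<integral>\<^sup>+ j. ennpowr (G m j) p \<partial>?cs)"
      by (rule nn_integral_suminf) simp
    also have "\<dots> = (\<Sum>m. ennreal (C powr p * (\<rho> powr p) ^ m) * S)"
    proof (rule suminf_cong)
      fix m
      have "(\<integral>\<^sup>+ j. ennpowr (G m j) p \<partial>?cs) = (\<integral>\<^sup>+ j. ennreal (C powr p * (\<rho> powr p) ^ m) * ennreal (a (j + int m) powr p) \<partial>?cs)"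
      proof (rule nn_integral_cong)
        fix j
        have "(C * \<rho> ^ m * a (j + int m)) powr p = C powr p * (\<rho> powr p) ^ m * a (j + int m) powr p"
          using C \<rho>0 a0 by (simp add: powr_mult powr_realpow[symmetric] powr_powr mult.commute[of "real m"])
        then show "ennpowr (G m j) p = ennreal (C powr p * (\<rho> powr p) ^ m) * ennreal (a (j + int m) powr p)"
          unfolding G_def using C \<rho>0 a0 by (simp add: ennpowr_ennreal ennreal_mult'[symmetric])
      qed
      also have "\<dots> = ennreal (C powr p * (\<rho> powr p) ^ m) * (\<integral>\<^sup>+ j. ennreal (a (j + int m) powr p) \<partial>?cs)"
        by (rule nn_integral_cmult) simp
      also have "(\<integral>\<^sup>+ j. ennreal (a (j + int m) powr p) \<partial>?cs) = S"
        unfolding S_def by (rule shift_cs[of "\<lambda>j. ennreal (a j powr p)"])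
      finally show "(\<integral>\<^sup>+ j. ennpowr (G m j) p \<partial>?cs) = ennreal (C powr p * (\<rho> powr p) ^ m) * S" .
    qed
    also have "\<dots> = (\<Sum>m. ennreal (C powr p * (\<rho> powr p) ^ m)) * S"
      by (simp add: mult.commute[of _ S])
    also have "\<dots> < \<infinity>"
    proof -
      have "\<rho> powr p < 1" using \<rho>0 \<rho>1 p powr_less_mono2[of p \<rho> 1] by simp
      then have "(\<Sum>m. ennreal (C powr p * (\<rho> powr p) ^ m)) < \<infinity>"
        using \<rho>0 by (intro geom_ennreal_finite) auto
      then show ?thesis using Sfin by (simp add: ennreal_mult_less_top)
    qed
    finally show ?thesis using H by (rule le_less_trans[rotated])
  qed
qed



lemma dir12:
  fixes f :: "'a::euclidean_space \<Rightarrow> real" and \<alpha> t p r q C :: real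
  assumes \<alpha>: "\<alpha> > 0" and t: "t > 0" and p: "p > 0" and r: "r > 1" and q: "q \<ge> 1" and C: "C > 0"
    and fsp: "f \<in> herz_slice_space \<alpha> p q r t"
  shows "\<exists>(lam::int \<Rightarrow> real) (b::int \<Rightarrow> 'a \<Rightarrow> real).
       (\<lambda>k. \<bar>lam k\<bar> powr p) summable_on UNIV \<and>
       (\<forall>k. dyadic_central_block C \<alpha> q r t k (b k)) \<and>
       (\<forall>x. ((\<lambda>k. lam k * b k x) has_sum f x) UNIV)"
proof -
  have r0: "r > 0" and q0: "q > 0" using r q by auto
  have f[measurable]: "f \<in> borel_measurable lebesgue" and Hfin: "herz_slice_normp \<alpha> p q r t f < \<infinity>"
    using fsp by (auto simp: herz_slice_space_def)
  have Skm[measurable]: "Sk j \<in> sets lebesgue" for j :: int by (rule Sk_sets)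
  define N where "N k = slice_norm t r q (\<lambda>x. f x * indicator (Sk k) x)" for k
  have tm_le: "ennreal (2 powr (real_of_int k * \<alpha> * p)) * ennpowr (N k) p \<le> herz_slice_normp \<alpha> p q r t f" for k
    unfolding herz_slice_normp_def N_def by (rule single_le_infsum_ennreal)
  have Nfin: "N k < top" for k
  proof (rule ccontr)
    assume "\<not> N k < top"
    then have "N k = top" by (metis less_top)
    then have "ennreal (2 powr (real_of_int k * \<alpha> * p)) * ennpowr (N k) p = top"
      by (simp add: ennreal_mult_top)
    then show False using tm_le[of k] Hfin by simp
  qed
  define \<nu> where "\<nu> k = enn2real (N k)" for k
  have \<nu>0: "\<nu> k \<ge> 0" for k unfolding \<nu>_def by simp
  have N\<nu>: "N k = ennreal (\<nu> k)" for k using Nfin[of k] unfolding \<nu>_def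
    by (simp add: ennreal_enn2real_if less_top)
  define T where "T k = (if k = 0 then insert (0::'a) (Sk 0) else Sk k)" for k :: int
  define lam where "lam k = (if \<nu> k > 0 then 2 powr (real_of_int k * \<alpha>) * \<nu> k / C
                             else (1/2) powr (real (int_encode k) / p))" for k
  have lam_pos: "lam k > 0" for k unfolding lam_def using C by auto
  define b where "b k x = f x * indicator (T k) x / lam k" for k x
  have zs: "{0::'a} \<in> sets lebesgue"
  proof -
    have "{0::'a} = cball 0 0" by auto
    then show ?thesis using lmeasurable_cball fmeasurableD by metis
  qed
  have Tm[measurable]: "T k \<in> sets lebesgue" for k
    unfolding T_def using zs Sk_sets by (auto intro: sets.Un[of "{0}" lebesgue "Sk 0", simplified])
  have T_iff: "x \<in> T k \<longleftrightarrow> k = (if x = 0 then 0 else \<lceil>log 2 (norm x)\<rceil>)" for x k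
    unfolding T_def by (auto simp: Sk_iff)
  have AE0: "AE x in lebesgue. f x * indicator (T k) x = f x * indicator (Sk k) x" for k
  proof -
    have "AE x in lebesgue. x \<noteq> (0::'a)"
      by (rule AE_completion) (rule AE_lborel_singleton)
    then show ?thesis
      by eventually_elim (auto simp: T_def split: split_indicator)
  qed
  have blk: "dyadic_central_block C \<alpha> q r t k (b k)" for k
  proof -
    have bm: "b k \<in> borel_measurable lebesgue" unfolding b_def by measurable
    have sup: "{x. b k x \<noteq> 0} \<subseteq> Bk k"
    proof
      fix x assume "x \<in> {x. b k x \<noteq> 0}"
      then have "x \<in> T k" unfolding b_def by (auto simp: indicator_def split: if_splits)
      then show "x \<in> Bk k" unfolding T_def by (auto simp: Sk_def Bk_def split: if_splits)
    qed
    have "slice_norm t r q (b k) = slice_norm t r q (\<lambda>x. (1 / lam k) * (f x * indicator (T k) x))"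
      unfolding b_def by (simp add: field_simps)
    also have "\<dots> = ennreal \<bar>1 / lam k\<bar> * slice_norm t r q (\<lambda>x. f x * indicator (T k) x)"
      by (rule slice_cmult[OF t r0 q0]) measurable
    also have "slice_norm t r q (\<lambda>x. f x * indicator (T k) x) = N k"
      unfolding N_def by (rule slice_AE[OF AE0])
    also have "ennreal \<bar>1 / lam k\<bar> * N k \<le> ennreal (C * (2 powr real_of_int k) powr (- \<alpha>))"
    proof (cases "\<nu> k > 0")
      case True
      have "ennreal \<bar>1 / lam k\<bar> * N k = ennreal (\<nu> k / lam k)"
        unfolding N\<nu> using lam_pos[of k] \<nu>0[of k] by (simp add: ennreal_mult'[symmetric])
      also have "\<nu> k / lam k = C / 2 powr (real_of_int k * \<alpha>)"
        unfolding lam_def using True C by (simp add: field_simps)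
      also have "\<dots> = C * (2 powr real_of_int k) powr (- \<alpha>)"
        by (simp add: powr_powr powr_minus divide_inverse)
      finally show ?thesis by simp
    next
      case False
      then have "\<nu> k = 0" using \<nu>0[of k] by simp
      then show ?thesis by (simp add: N\<nu>)
    qed
    finally show ?thesis unfolding dyadic_central_block_def using bm sup by simp
  qed
  have hs: "((\<lambda>k. lam k * b k x) has_sum f x) UNIV" for x
  proof -
    define kx where "kx = (if x = 0 then 0 else \<lceil>log 2 (norm x)\<rceil>)"
    have eq: "lam k * b k x = (if k = kx then f x else 0)" for k
      unfolding b_def kx_def using lam_pos[of k] T_iff[of x k] by (auto split: split_indicator)
    have "((\<lambda>k. if k = kx then f x else 0) has_sum f x) {kx}"
      by (rule has_sum_finiteI) auto
    then have "((\<lambda>k. if k = kx then f x else 0) has_sum f x) UNIV"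
      by (subst has_sum_cong_neutral[where T="{kx}"]) auto
    then show ?thesis by (simp add: eq)
  qed
  have summ: "(\<lambda>k. \<bar>lam k\<bar> powr p) summable_on UNIV"
  proof -
    define g1 where "g1 k = 2 powr (real_of_int k * \<alpha> * p) * \<nu> k powr p" for k
    define g2 where "g2 k = ((1::real)/2) ^ (int_encode k)" for k
    have g1s: "g1 summable_on UNIV"
    proof (rule summable_from_ennreal)
      show "g1 k \<ge> 0" for k unfolding g1_def by simp
      have "ennreal (g1 k) = ennreal (2 powr (real_of_int k * \<alpha> * p)) * ennpowr (N k) p" for k
        unfolding g1_def N\<nu> using \<nu>0[of k] by (simp add: ennpowr_ennreal ennreal_mult')
      then have "(\<Sum>\<^sub>\<infinity>k\<in>UNIV. ennreal (g1 k)) = herz_slice_normp \<alpha> p q r t f"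
        unfolding herz_slice_normp_def N_def by simp
      then show "(\<Sum>\<^sub>\<infinity>k\<in>UNIV. ennreal (g1 k)) < \<infinity>" using Hfin by simp
    qed
    have g2s: "g2 summable_on UNIV"
    proof -
      have "(\<lambda>n::nat. ((1::real)/2) ^ n) summable_on UNIV"
        by (rule summable_nonneg_imp_summable_on) (auto intro: summable_geometric)
      then have "(\<lambda>n. g2 (int_decode n)) summable_on UNIV" by (simp add: g2_def)
      then show ?thesis
        using summable_on_reindex_bij_betw[of int_decode UNIV UNIV g2] bij_int_decode
        by (simp add: bij_betw_def)
    qed
    define g where "g k = C powr (- p) * g1 k + g2 k" for k
    have gs: "g summable_on UNIV" unfolding g_def
      by (intro summable_on_add summable_on_cmult_right g1s g2s)
    have gabs: "(\<lambda>k. norm (g k)) summable_on UNIV"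
    proof -
      have "g k \<ge> 0" for k unfolding g_def g1_def g2_def by simp
      then have "(\<lambda>k. norm (g k)) = g" by (auto simp: fun_eq_iff)
      then show ?thesis using gs by simp
    qed
    have le: "norm (\<bar>lam k\<bar> powr p) \<le> norm (g k)" for k
    proof -
      have g1n: "g1 k \<ge> 0" "g2 k \<ge> 0" unfolding g1_def g2_def by auto
      have "\<bar>lam k\<bar> powr p \<le> g k"
      proof (cases "\<nu> k > 0")
        case True
        have "\<bar>lam k\<bar> powr p = (2 powr (real_of_int k * \<alpha>) * \<nu> k / C) powr p"
          unfolding lam_def using True C by simp
        also have "\<dots> = C powr (- p) * g1 k"
          unfolding g1_def using True C
          by (simp add: powr_divide powr_mult powr_powr powr_minus divide_inverse inverse_powr)
        also have "\<dots> \<le> g k" unfolding g_def using g1n by simp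
        finally show ?thesis .
      next
        case False
        have "\<bar>lam k\<bar> powr p = ((1/2) powr (real (int_encode k) / p)) powr p"
          unfolding lam_def using False by simp
        also have "\<dots> = g2 k"
          unfolding g2_def using p by (simp add: powr_powr powr_realpow)
        also have "\<dots> \<le> g k" unfolding g_def using g1n C by simp
        finally show ?thesis .
      qed
      then show ?thesis using g1n C by (simp add: g_def)
    qed
    have "(\<lambda>k. norm (\<bar>lam k\<bar> powr p)) summable_on UNIV"
      by (rule Infinite_Sum.abs_summable_on_comparison_test[OF gabs]) (rule le)
    then show ?thesis by simp
  qed
  show ?thesis using summ blk hs by blast
qed

theorem theorem4p1:
  fixes f :: "'a::euclidean_space \<Rightarrow> real"
    and \<alpha> t p r q C :: real
  assumes "\<alpha> > 0" "t > 0" "p > 0" "r > 1" "q \<ge> 1" "C > 0"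
    and "f \<in> borel_measurable lebesgue"
  shows "f \<in> herz_slice_space \<alpha> p q r t \<longleftrightarrow>
    (\<exists>(lam::int \<Rightarrow> real) (b::int \<Rightarrow> 'a \<Rightarrow> real).
       (\<lambda>k. \<bar>lam k\<bar> powr p) summable_on UNIV \<and>
       (\<forall>k. dyadic_central_block C \<alpha> q r t k (b k)) \<and>
       (\<forall>x. ((\<lambda>k. lam k * b k x) has_sum f x) UNIV))"
proof
  assume "f \<in> herz_slice_space \<alpha> p q r t"
  then show "\<exists>(lam::int \<Rightarrow> real) (b::int \<Rightarrow> 'a \<Rightarrow> real).
       (\<lambda>k. \<bar>lam k\<bar> powr p) summable_on UNIV \<and>
       (\<forall>k. dyadic_central_block C \<alpha> q r t k (b k)) \<and>
       (\<forall>x. ((\<lambda>k. lam k * b k x) has_sum f x) UNIV)"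
    using dir12 assms by blast
next
  assume "\<exists>(lam::int \<Rightarrow> real) (b::int \<Rightarrow> 'a \<Rightarrow> real).
       (\<lambda>k. \<bar>lam k\<bar> powr p) summable_on UNIV \<and>
       (\<forall>k. dyadic_central_block C \<alpha> q r t k (b k)) \<and>
       (\<forall>x. ((\<lambda>k. lam k * b k x) has_sum f x) UNIV)"
  then obtain lam b where "(\<lambda>k. \<bar>lam k\<bar> powr p) summable_on UNIV"
      "\<forall>k. dyadic_central_block C \<alpha> q r t k (b k)"
      "\<forall>x. ((\<lambda>k. lam k * b k x) has_sum f x) UNIV" by blast
  then have "herz_slice_normp \<alpha> p q r t f < \<infinity>"
    using dir21[OF assms] by blast
  then show "f \<in> herz_slice_space \<alpha> p q r t"
    using assms by (simp add: herz_slice_space_def)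
qed


end
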